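(* Let $G$ be a finite non-abelian group satisfying condition (Con). Then the isoperimetric number of $\mathcal C_G$ satisfies $$\frac{|Z(G)|}{2}\le i(\mathcal C_G)\le \sqrt{|Z(G)|\big(2(|G|-1)-|Z(G)|\big)}.$$
   Context: For a finite group $G$, the commuting graph $\mathcal C_G$ is the simple undirected graph with vertex set $G$ in which distinct $u,v\in G$ are adjacent iff $uv=vu$. $Z(G)$ is the center of $G$ and $C(v)=\{w\in G: wv=vw\}$ the centralizer of $v$. Condition (Con): for all $u,v\in G\setminus Z(G)$, either $C(u)=C(v)$ or $C(u)\cap C(v)=Z(G)$. For a graph $\Gamma$ with vertex set $V$, $\partial S$ is the set of edges with exactly one endpoint in $S$, and the isoperimetric number is $i(\Gamma)=\min\{|\partial S|/|S|: S\subseteq V,\ 0<|S|\le |V|/2\}$. *)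

theory Defs
  imports "HOL-Algebra.Group" Complex_Main
begin

definition grp_center :: "('a, 'b) monoid_scheme \<Rightarrow> 'a set" where
  "grp_center G = {z \<in> carrier G. \<forall>g \<in> carrier G. z \<otimes>\<^bsub>G\<^esub> g = g \<otimes>\<^bsub>G\<^esub> z}"

definition grp_centralizer :: "('a, 'b) monoid_scheme \<Rightarrow> 'a \<Rightarrow> 'a set" where
  "grp_centralizer G v = {w \<in> carrier G. w \<otimes>\<^bsub>G\<^esub> v = v \<otimes>\<^bsub>G\<^esub> w}"

definition con_condition :: "('a, 'b) monoid_scheme \<Rightarrow> bool" where
  "con_condition G \<longleftrightarrow>
     (\<forall>u \<in> carrier G - grp_center G. \<forall>v \<in> carrier G - grp_center G.
        grp_centralizer G u = grp_centralizer G v \<or>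
        grp_centralizer G u \<inter> grp_centralizer G v = grp_center G)"

definition commuting_graph_edges :: "('a, 'b) monoid_scheme \<Rightarrow> 'a set set" where
  "commuting_graph_edges G =
     {{u, v} | u v. u \<in> carrier G \<and> v \<in> carrier G \<and> u \<noteq> v \<and>
                    u \<otimes>\<^bsub>G\<^esub> v = v \<otimes>\<^bsub>G\<^esub> u}"

definition edge_boundary :: "'a set set \<Rightarrow> 'a set \<Rightarrow> 'a set set" where
  "edge_boundary E S = {e \<in> E. card (e \<inter> S) = 1}"

definition isoperimetric_number :: "'a set \<Rightarrow> 'a set set \<Rightarrow> real" where
  "isoperimetric_number V E =
     Min {real (card (edge_boundary E S)) / real (card S) | S.
            S \<subseteq> V \<and> 0 < card S \<and> real (card S) \<le> real (card V) / 2}"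

end

theory Submission
  imports Defs "HOL-Algebra.Coset"
begin

lemma centralizer_subgroup:
  fixes G (structure)
  assumes "group G" and "u \<in> carrier G"
  shows "subgroup (grp_centralizer G u) G"
proof -
  interpret group G by fact
  show ?thesis
  proof (rule subgroupI)
    show "grp_centralizer G u \<subseteq> carrier G" by (auto simp: grp_centralizer_def)
    show "grp_centralizer G u \<noteq> {}" using assms by (auto simp: grp_centralizer_def intro!: exI[of _ \<one>])
  next
    fix a assume a: "a \<in> grp_centralizer G u"
    hence ac: "a \<in> carrier G" and e: "a \<otimes> u = u \<otimes> a" by (auto simp: grp_centralizer_def)
    have "inv a \<otimes> u = inv a \<otimes> u \<otimes> (a \<otimes> inv a)" using ac assms by simp
    also have "\<dots> = inv a \<otimes> (u \<otimes> a) \<otimes> inv a" using ac assms by (simp add: m_assoc)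
    also have "\<dots> = inv a \<otimes> (a \<otimes> u) \<otimes> inv a" using e by simp
    also have "\<dots> = u \<otimes> inv a" using ac assms by (simp add: m_assoc[symmetric])
    finally show "inv a \<in> grp_centralizer G u" using ac by (simp add: grp_centralizer_def)
  next
    fix a b assume "a \<in> grp_centralizer G u" "b \<in> grp_centralizer G u"
    hence ac: "a \<in> carrier G" "b \<in> carrier G" and e: "a \<otimes> u = u \<otimes> a" "b \<otimes> u = u \<otimes> b"
      by (auto simp: grp_centralizer_def)
    have "a \<otimes> b \<otimes> u = a \<otimes> (b \<otimes> u)" using ac assms by (simp add: m_assoc)
    also have "\<dots> = a \<otimes> (u \<otimes> b)" using e by simp
    also have "\<dots> = (a \<otimes> u) \<otimes> b" using ac assms by (simp add: m_assoc)
    also have "\<dots> = (u \<otimes> a) \<otimes> b" using e by simp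
    also have "\<dots> = u \<otimes> (a \<otimes> b)" using ac assms by (simp add: m_assoc)
    finally show "a \<otimes> b \<in> grp_centralizer G u" using ac by (simp add: grp_centralizer_def)
  qed
qed

lemma centralizer_half:
  fixes G (structure)
  assumes "group G" "finite (carrier G)" "u \<in> carrier G" "u \<notin> grp_center G"
  shows "2 * card (grp_centralizer G u) \<le> card (carrier G)"
proof -
  interpret group G by fact
  have sg: "subgroup (grp_centralizer G u) G" by (rule centralizer_subgroup[OF assms(1,3)])
  obtain k where L: "k * card (grp_centralizer G u) = card (carrier G)"
    using lagrange[OF sg] unfolding order_def by blast
  have sub: "grp_centralizer G u \<subseteq> carrier G" by (auto simp: grp_centralizer_def)
  have ne: "grp_centralizer G u \<noteq> carrier G"
  proof
    assume h: "grp_centralizer G u = carrier G"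
    have "\<forall>g \<in> carrier G. u \<otimes> g = g \<otimes> u"
    proof
      fix g assume "g \<in> carrier G"
      hence "g \<in> grp_centralizer G u" using h by simp
      thus "u \<otimes> g = g \<otimes> u" unfolding grp_centralizer_def by simp
    qed
    hence "u \<in> grp_center G" using assms(3) unfolding grp_center_def by simp
    thus False using assms(4) by blast
  qed
  have lt: "card (grp_centralizer G u) < card (carrier G)"
    using psubset_card_mono[OF assms(2)] sub ne by blast
  have k0: "k \<noteq> 0" using L lt by (cases "k = 0") simp_all
  have k1: "k \<noteq> 1" using L lt by (cases "k = 1") simp_all
  have "k \<ge> 2" using k0 k1 by linarith
  hence "2 * card (grp_centralizer G u) \<le> k * card (grp_centralizer G u)"
    by (rule mult_le_mono1)
  thus ?thesis using L by simp
qed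

lemma center_comm:
  assumes "z \<in> grp_center G" "g \<in> carrier G"
  shows "z \<otimes>\<^bsub>G\<^esub> g = g \<otimes>\<^bsub>G\<^esub> z"
  using assms by (auto simp: grp_center_def)

lemma boundary_finite:
  assumes "finite (carrier G)"
  shows "finite (edge_boundary (commuting_graph_edges G) S)"
proof -
  have "commuting_graph_edges G \<subseteq> Pow (carrier G)"
    by (auto simp: commuting_graph_edges_def)
  hence "finite (commuting_graph_edges G)" using assms finite_Pow_iff finite_subset by metis
  thus ?thesis unfolding edge_boundary_def by simp
qed

lemma lower_count:
  assumes "finite (carrier G)" "S \<subseteq> carrier G"
  shows "card (S \<inter> grp_center G) * card (carrier G - S) + card (S - grp_center G) * card (grp_center G - S)
         \<le> card (edge_boundary (commuting_graph_edges G) S)"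
proof -
  let ?Z = "grp_center G" and ?V = "carrier G"
  define P where "P = (S \<inter> ?Z) \<times> (?V - S) \<union> (S - ?Z) \<times> (?Z - S)"
  define f where "f = (\<lambda>(x::'a, y::'a). {x, y})"
  have Zsub: "?Z \<subseteq> ?V" by (auto simp: grp_center_def)
  have fS: "finite S" using assms finite_subset by blast
  have fZ: "finite ?Z" using assms Zsub finite_subset by blast
  have cP: "card P = card (S \<inter> ?Z) * card (?V - S) + card (S - ?Z) * card (?Z - S)"
    unfolding P_def
    by (subst card_Un_disjoint) (use fS fZ assms in \<open>auto simp: card_cartesian_product\<close>)
  have inj: "inj_on f P"
    unfolding inj_on_def P_def f_def by (auto simp: doubleton_eq_iff)
  have img: "f ` P \<subseteq> edge_boundary (commuting_graph_edges G) S"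
  proof
    fix e assume "e \<in> f ` P"
    then obtain x y where xy: "(x, y) \<in> P" "e = {x, y}" unfolding f_def by auto
    have xS: "x \<in> S" and yS: "y \<notin> S" and yV: "y \<in> ?V" using xy Zsub unfolding P_def by auto
    have xV: "x \<in> ?V" using xS assms by auto
    have cm: "x \<otimes>\<^bsub>G\<^esub> y = y \<otimes>\<^bsub>G\<^esub> x"
      using xy(1) center_comm[of x G y] center_comm[of y G x] xV yV unfolding P_def by auto
    have "e \<in> commuting_graph_edges G"
      unfolding commuting_graph_edges_def using xy(2) xV yV xS yS cm by blast
    moreover have "e \<inter> S = {x}" using xy(2) xS yS by auto
    ultimately show "e \<in> edge_boundary (commuting_graph_edges G) S"
      unfolding edge_boundary_def by simp
  qed
  have "card P = card (f ` P)" using card_image[OF inj] by simp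
  also have "\<dots> \<le> card (edge_boundary (commuting_graph_edges G) S)"
    using card_mono[OF boundary_finite[OF assms(1)] img] .
  finally show ?thesis using cP by simp
qed

lemma real_ineq:
  fixes a b z n :: real
  assumes "0 \<le> a" "0 \<le> b" "a \<le> z" "z \<le> n" "2 * (a + b) \<le> n"
  shows "z * (a + b) / 2 \<le> a * (n - (a + b)) + b * (z - a)"
proof (cases "2 * a \<le> z")
  case True
  have "z / 2 \<le> z - a" using True by simp
  hence "b * (z / 2) \<le> b * (z - a)" using assms(2) by (rule mult_left_mono)
  hence "b * z / 2 \<le> b * (z - a)" by simp
  moreover have "a * z / 2 \<le> a * (n - (a + b))"
  proof -
    have "z / 2 \<le> n - (a+b)" using assms by simp
    thus ?thesis using assms(1) by (metis mult_left_mono times_divide_eq_right)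
  qed
  moreover have "z * (a + b) / 2 = a * z / 2 + b * z / 2" by (simp add: field_simps)
  ultimately show ?thesis by linarith
next
  case False
  have "z * (a + b) \<le> z * (n / 2)" using assms by (intro mult_left_mono) auto
  also have "\<dots> \<le> 2 * a * (n / 2)" using False assms by (intro mult_right_mono) auto
  also have "\<dots> \<le> 2 * (a * (n - (a + b)))"
  proof -
    have "n / 2 \<le> n - (a+b)" using assms by simp
    hence h: "a * (n / 2) \<le> a * (n - (a+b))" using assms(1) by (rule mult_left_mono)
    have "2 * a * (n / 2) = 2 * (a * (n / 2))" by simp
    thus ?thesis using h by linarith
  qed
  finally have "z * (a + b) / 2 \<le> a * (n - (a + b))" by simp
  moreover have "0 \<le> b * (z - a)" using assms by simp
  ultimately show ?thesis by linarith
qed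

theorem proposition3p6:
  fixes G :: "('a, 'b) monoid_scheme"
  assumes "group G"
    and "finite (carrier G)"
    and "\<not> comm_group G"
    and "con_condition G"
  shows "real (card (grp_center G)) / 2
           \<le> isoperimetric_number (carrier G) (commuting_graph_edges G)
       \<and> isoperimetric_number (carrier G) (commuting_graph_edges G)
           \<le> sqrt (real (card (grp_center G)) *
                   (2 * (real (card (carrier G)) - 1) - real (card (grp_center G))))"
proof -
  interpret group G by fact
  let ?Z = "grp_center G" and ?V = "carrier G" and ?E = "commuting_graph_edges G"
  define X where "X = {real (card (edge_boundary ?E S)) / real (card S) | S.
            S \<subseteq> ?V \<and> 0 < card S \<and> real (card S) \<le> real (card ?V) / 2}"
  have iso: "isoperimetric_number ?V ?E = Min X" unfolding isoperimetric_number_def X_def ..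
  have Zsub: "?Z \<subseteq> ?V" by (auto simp: grp_center_def)
  obtain u where uV: "u \<in> ?V" and uZ: "u \<notin> ?Z"
  proof -
    have "?Z \<noteq> ?V"
    proof
      assume "?Z = ?V"
      hence "comm_group G" by (intro group_comm_groupI) (auto simp: grp_center_def)
      thus False using assms(3) by blast
    qed
    thus ?thesis using Zsub that by blast
  qed
  define S where "S = grp_centralizer G u - ?Z"
  have CV: "grp_centralizer G u \<subseteq> ?V" by (auto simp: grp_centralizer_def)
  have uS: "u \<in> S" using uV uZ by (auto simp: S_def grp_centralizer_def)
  have SV: "S \<subseteq> ?V" using CV S_def by auto
  have fS: "finite S" using SV assms(2) finite_subset by blast
  have Spos: "0 < card S" using uS fS card_gt_0_iff by blast
  have "card S \<le> card (grp_centralizer G u)" unfolding S_def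
    using CV assms(2) finite_subset by (intro card_mono) auto
  hence Shalf: "real (card S) \<le> real (card ?V) / 2"
    using centralizer_half[OF assms(1,2) uV uZ] by simp
  have fX: "finite X"
  proof -
    have "X \<subseteq> (\<lambda>S. real (card (edge_boundary ?E S)) / real (card S)) ` Pow ?V"
      unfolding X_def by auto
    thus ?thesis using assms(2) finite_subset by blast
  qed
  define r where "r = real (card (edge_boundary ?E S)) / real (card S)"
  have rX: "r \<in> X" unfolding X_def r_def using SV Spos Shalf by blast
  have neX: "X \<noteq> {}" using rX by blast
  have bsub: "edge_boundary ?E S \<subseteq> (\<lambda>(x, y). {x, y}) ` (S \<times> ?Z)"
  proof
    fix e assume e: "e \<in> edge_boundary ?E S"
    then obtain p q where pq: "e = {p, q}" "p \<in> ?V" "q \<in> ?V" "p \<noteq> q" "p \<otimes>\<^bsub>G\<^esub> q = q \<otimes>\<^bsub>G\<^esub> p"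
      by (auto simp: edge_boundary_def commuting_graph_edges_def)
    have c1: "card (e \<inter> S) = 1" using e by (simp add: edge_boundary_def)
    have key: "y \<in> ?Z" if yx: "x \<in> S" "y \<notin> S" "y \<in> ?V" "x \<in> ?V" "x \<otimes>\<^bsub>G\<^esub> y = y \<otimes>\<^bsub>G\<^esub> x" for x y
    proof (rule ccontr)
      assume yZ: "y \<notin> ?Z"
      have xZ: "x \<notin> ?Z" using yx S_def by auto
      have "u \<in> grp_centralizer G x" using yx uV S_def by (auto simp: grp_centralizer_def)
      moreover have "u \<in> grp_centralizer G u" using uV by (auto simp: grp_centralizer_def)
      ultimately have "grp_centralizer G x = grp_centralizer G u"
        using assms(4) xZ uZ yx(4) uV unfolding con_condition_def by blast
      moreover have "y \<in> grp_centralizer G x" using yx by (auto simp: grp_centralizer_def)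
      ultimately show False using yZ yx(2) S_def by auto
    qed
    show "e \<in> (\<lambda>(x, y). {x, y}) ` (S \<times> ?Z)"
    proof (cases "p \<in> S")
      case True
      have "q \<notin> S" using c1 pq True by (auto simp: card_insert_if split: if_splits)
      hence "q \<in> ?Z" using key[of p q] True pq by auto
      thus ?thesis using pq True by force
    next
      case False
      have "q \<in> S" using c1 pq False by (cases "q \<in> S") auto
      hence "p \<in> ?Z" using key[of q p] False pq by auto
      thus ?thesis using pq \<open>q \<in> S\<close> by (auto intro!: image_eqI[of _ _ "(q, p)"])
    qed
  qed
  have fZ: "finite ?Z" using assms(2) Zsub finite_subset by blast
  have "card (edge_boundary ?E S) \<le> card ((\<lambda>(x, y). {x, y}) ` (S \<times> ?Z))"
    using bsub fS fZ by (intro card_mono) auto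
  also have "\<dots> \<le> card (S \<times> ?Z)" by (rule card_image_le) (use fS fZ in auto)
  finally have "card (edge_boundary ?E S) \<le> card S * card ?Z" by (simp add: card_cartesian_product)
  hence "real (card (edge_boundary ?E S)) \<le> real (card S) * real (card ?Z)" by (metis of_nat_le_iff of_nat_mult)
  hence rle: "r \<le> real (card ?Z)" unfolding r_def using Spos by (simp add: divide_le_eq mult.commute)
  have "card ?Z < card ?V" using psubset_card_mono[OF assms(2)] Zsub uV uZ by blast
  hence zn: "real (card ?Z) \<le> real (card ?V) - 1" by linarith
  have "real (card ?Z) \<le> sqrt (real (card ?Z) * (2 * (real (card ?V) - 1) - real (card ?Z)))"
  proof (rule real_le_rsqrt)
    show "real (card ?Z) ^ 2 \<le> real (card ?Z) * (2 * (real (card ?V) - 1) - real (card ?Z))"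
      using zn by (simp add: power2_eq_square mult_left_mono)
  qed
  hence up: "Min X \<le> sqrt (real (card ?Z) * (2 * (real (card ?V) - 1) - real (card ?Z)))"
    using Min_le[OF fX rX] rle by linarith
  have low: "real (card ?Z) / 2 \<le> x" if "x \<in> X" for x
  proof -
    obtain T where T: "x = real (card (edge_boundary ?E T)) / real (card T)" "T \<subseteq> ?V"
      "0 < card T" "real (card T) \<le> real (card ?V) / 2"
      using \<open>x \<in> X\<close> unfolding X_def by blast
    have fT: "finite T" using T(2) assms(2) finite_subset by blast
    define a where "a = card (T \<inter> ?Z)"
    define b where "b = card (T - ?Z)"
    have ab: "card T = a + b" unfolding a_def b_def using fT
      by (metis Diff_Diff_Int Int_commute card_Diff_subset_Int card_Int_Diff finite_Int inf_commute)
    have c1: "card (?V - T) = card ?V - (a + b)" using card_Diff_subset[OF fT T(2)] ab by simp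
    have c2: "card (?Z - T) = card ?Z - a" unfolding a_def using fZ
      by (metis card_Diff_subset_Int finite_Int inf_commute)
    have aZ: "a \<le> card ?Z" unfolding a_def using fZ by (intro card_mono) auto
    have abV: "a + b \<le> card ?V" using T(4) ab by linarith
    have zV: "card ?Z \<le> card ?V" using card_mono[OF assms(2) Zsub] .
    have lc: "a * (card ?V - (a + b)) + b * (card ?Z - a) \<le> card (edge_boundary ?E T)"
      using lower_count[OF assms(2) T(2)] c1 c2 a_def b_def by simp
    hence lcr0: "real (a * (card ?V - (a + b)) + b * (card ?Z - a)) \<le> real (card (edge_boundary ?E T))"
      by (rule of_nat_mono)
    have d1: "real (card ?V - (a + b)) = real (card ?V) - (real a + real b)" using abV by (simp add: of_nat_diff)
    have d2: "real (card ?Z - a) = real (card ?Z) - real a" using aZ by (simp add: of_nat_diff)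
    have lcr: "real a * (real (card ?V) - (real a + real b)) + real b * (real (card ?Z) - real a)
          \<le> real (card (edge_boundary ?E T))"
      using lcr0 unfolding of_nat_add of_nat_mult d1 d2 .
    have "real (card ?Z) * (real a + real b) / 2
          \<le> real a * (real (card ?V) - (real a + real b)) + real b * (real (card ?Z) - real a)"
      by (rule real_ineq) (use aZ zV T(4) ab in auto)
    hence "real (card ?Z) * real (card T) / 2 \<le> real (card (edge_boundary ?E T))"
      using lcr ab by simp
    thus ?thesis using T(1,3) by (simp add: le_divide_eq)
  qed
  have "real (card ?Z) / 2 \<le> Min X" using fX neX low by (simp add: Min_ge_iff)
  thus ?thesis using up iso by simp
qed

end
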